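(* Let $G_1=(V_1,E_1)$ and $G_2=(V_2,E_2)$ be finite, simple, connected graphs. The following are equivalent: (i) $G_1$ and $G_2$ are reflective; (ii) the cartesian product $G_1\times G_2$ is reflective.
   Context: $d$ is the combinatorial distance. For adjacent $x\sim y$ in a graph with vertex set $V$ let $V_x^y=\{v: d(v,x)<d(v,y)\}$, $V^{xy}=\{v:d(v,x)=d(v,y)\}$. A reflection from $x$ to $y$ is a graph automorphism $\phi$ with $\phi\circ\phi=\mathrm{id}$, $\phi(x)=y$, such that the edges between $V_x^y$ and $V_y^x$ are exactly $\{\{x',\phi(x')\}:x'\in V_x^y\}$ and $\phi$ fixes $V^{xy}$ pointwise. A graph is reflective if every edge admits a reflection. Cartesian product: vertex set $V_1\times V_2$, $(a,b)\sim(a',b')$ iff ($a=a'$, $b\sim b'$) or ($a\sim a'$, $b=b'$). *)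

theory Defs
  imports Main
begin

definition simple_graph :: "'a set \<Rightarrow> ('a \<Rightarrow> 'a \<Rightarrow> bool) \<Rightarrow> bool" where
  "simple_graph V E \<longleftrightarrow>
     (\<forall>u v. E u v \<longrightarrow> u \<in> V \<and> v \<in> V) \<and>
     (\<forall>u v. E u v \<longrightarrow> E v u) \<and>
     (\<forall>u. \<not> E u u)"

definition walk :: "'a set \<Rightarrow> ('a \<Rightarrow> 'a \<Rightarrow> bool) \<Rightarrow> 'a list \<Rightarrow> bool" where
  "walk V E p \<longleftrightarrow> p \<noteq> [] \<and> set p \<subseteq> V \<and>
     (\<forall>i. Suc i < length p \<longrightarrow> E (p ! i) (p ! Suc i))"

definition connected_graph :: "'a set \<Rightarrow> ('a \<Rightarrow> 'a \<Rightarrow> bool) \<Rightarrow> bool" where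
  "connected_graph V E \<longleftrightarrow> V \<noteq> {} \<and>
     (\<forall>u\<in>V. \<forall>v\<in>V. \<exists>p. walk V E p \<and> hd p = u \<and> last p = v)"

definition gdist :: "'a set \<Rightarrow> ('a \<Rightarrow> 'a \<Rightarrow> bool) \<Rightarrow> 'a \<Rightarrow> 'a \<Rightarrow> nat" where
  "gdist V E u v = (LEAST n. \<exists>p. walk V E p \<and> hd p = u \<and> last p = v \<and> length p = Suc n)"

definition automorphism :: "'a set \<Rightarrow> ('a \<Rightarrow> 'a \<Rightarrow> bool) \<Rightarrow> ('a \<Rightarrow> 'a) \<Rightarrow> bool" where
  "automorphism V E \<phi> \<longleftrightarrow> bij_betw \<phi> V V \<and>
     (\<forall>u\<in>V. \<forall>v\<in>V. E (\<phi> u) (\<phi> v) \<longleftrightarrow> E u v)"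

definition closer :: "'a set \<Rightarrow> ('a \<Rightarrow> 'a \<Rightarrow> bool) \<Rightarrow> 'a \<Rightarrow> 'a \<Rightarrow> 'a set" where
  "closer V E x y = {v \<in> V. gdist V E v x < gdist V E v y}"

definition equidist :: "'a set \<Rightarrow> ('a \<Rightarrow> 'a \<Rightarrow> bool) \<Rightarrow> 'a \<Rightarrow> 'a \<Rightarrow> 'a set" where
  "equidist V E x y = {v \<in> V. gdist V E v x = gdist V E v y}"

text \<open>A reflection from x to y. The condition on edges says: the set of edges
  between V_x^y and V_y^x equals {{x', \<phi> x'} : x' \<in> V_x^y}.\<close>
definition reflection :: "'a set \<Rightarrow> ('a \<Rightarrow> 'a \<Rightarrow> bool) \<Rightarrow> 'a \<Rightarrow> 'a \<Rightarrow> ('a \<Rightarrow> 'a) \<Rightarrow> bool" where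
  "reflection V E x y \<phi> \<longleftrightarrow>
     automorphism V E \<phi> \<and>
     (\<forall>v\<in>V. \<phi> (\<phi> v) = v) \<and>
     \<phi> x = y \<and>
     (\<forall>u\<in>closer V E x y. \<forall>w\<in>closer V E y x. E u w \<longleftrightarrow> w = \<phi> u) \<and>
     (\<forall>u\<in>closer V E x y. \<phi> u \<in> closer V E y x \<and> E u (\<phi> u)) \<and>
     (\<forall>v\<in>equidist V E x y. \<phi> v = v)"

definition reflective :: "'a set \<Rightarrow> ('a \<Rightarrow> 'a \<Rightarrow> bool) \<Rightarrow> bool" where
  "reflective V E \<longleftrightarrow> (\<forall>x\<in>V. \<forall>y\<in>V. E x y \<longrightarrow> (\<exists>\<phi>. reflection V E x y \<phi>))"

definition cart_edges :: "('a \<Rightarrow> 'a \<Rightarrow> bool) \<Rightarrow> ('b \<Rightarrow> 'b \<Rightarrow> bool) \<Rightarrow> 'a \<times> 'b \<Rightarrow> 'a \<times> 'b \<Rightarrow> bool" where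
  "cart_edges E1 E2 p q \<longleftrightarrow>
     (fst p = fst q \<and> E2 (snd p) (snd q)) \<or> (E1 (fst p) (fst q) \<and> snd p = snd q)"

end

theory Submission
  imports Defs
begin


inductive R :: "'a set \<Rightarrow> ('a \<Rightarrow> 'a \<Rightarrow> bool) \<Rightarrow> 'a \<Rightarrow> 'a \<Rightarrow> nat \<Rightarrow> bool"
  for V E where
  R0: "u \<in> V \<Longrightarrow> R V E u u 0"
| RS: "R V E u v n \<Longrightarrow> E v w \<Longrightarrow> w \<in> V \<Longrightarrow> R V E u w (Suc n)"

lemma walk_snoc: "walk V E (q @ [w]) \<Longrightarrow> q \<noteq> [] \<Longrightarrow> walk V E q \<and> E (last q) w \<and> w \<in> V"
proof -
  assume a: "walk V E (q @ [w])" and q: "q \<noteq> []"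
  have 1: "walk V E q"
    unfolding walk_def
  proof (intro conjI allI impI)
    show "q \<noteq> []" by fact
    show "set q \<subseteq> V" using a unfolding walk_def by auto
    fix i assume "Suc i < length q"
    then show "E (q ! i) (q ! Suc i)" using a unfolding walk_def
      by (metis (no_types, lifting) Suc_lessD length_append_singleton less_SucI nth_append)
  qed
  have all: "\<forall>i. Suc i < length (q@[w]) \<longrightarrow> E ((q@[w]) ! i) ((q@[w]) ! Suc i)"
    using a unfolding walk_def by blast
  have "Suc (length q - 1) < length (q@[w])" using q by simp
  with all have "E ((q@[w]) ! (length q - 1)) ((q@[w]) ! Suc (length q - 1))" by blast
  moreover have "(q@[w]) ! (length q - 1) = last q" using q
    by (simp add: last_conv_nth nth_append)
  moreover have "(q@[w]) ! Suc (length q - 1) = w" using q by simp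
  ultimately have "E (last q) w" by simp
  moreover have "w \<in> V" using a unfolding walk_def by auto
  ultimately show ?thesis using 1 by auto
qed

lemma walk_R: "walk V E p \<Longrightarrow> R V E (hd p) (last p) (length p - 1)"
proof (induction p rule: rev_induct)
  case Nil
  then show ?case by (simp add: walk_def)
next
  case (snoc w q)
  show ?case
  proof (cases "q = []")
    case True
    then show ?thesis using snoc.prems by (auto simp: walk_def intro: R0)
  next
    case False
    from walk_snoc[OF snoc.prems False] have h: "walk V E q" "E (last q) w" "w \<in> V" by auto
    have "R V E (hd q) (last q) (length q - 1)" using snoc.IH h by auto
    then have "R V E (hd q) w (Suc (length q - 1))" using h RS by metis
    then show ?thesis using False by simp
  qed
qed

lemma R_walk: "R V E u v n \<Longrightarrow> \<exists>p. walk V E p \<and> hd p = u \<and> last p = v \<and> length p = Suc n"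
proof (induction rule: R.induct)
  case (R0 u)
  then show ?case by (intro exI[of _ "[u]"]) (auto simp: walk_def)
next
  case (RS u v n w)
  then obtain p where p: "walk V E p" "hd p = u" "last p = v" "length p = Suc n" by blast
  have "walk V E (p @ [w])"
    unfolding walk_def
  proof (intro conjI allI impI)
    show "p @ [w] \<noteq> []" by simp
    show "set (p @ [w]) \<subseteq> V" using p RS unfolding walk_def by auto
    fix i assume i: "Suc i < length (p @ [w])"
    show "E ((p @ [w]) ! i) ((p @ [w]) ! Suc i)"
    proof (cases "Suc i < length p")
      case True
      then show ?thesis using p unfolding walk_def by (simp add: nth_append)
    next
      case False
      then have "Suc i = length p" using i by simp
      then show ?thesis using p RS
        by (metis Suc_lessI append_Nil2 diff_Suc_1 last_conv_nth lessI nat.simps(3) nth_append nth_append_length walk_def)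
    qed
  qed
  then show ?case using p
    by (intro exI[of _ "p @ [w]"]) (auto simp: walk_def)
qed

lemma gdist_R_def: "gdist V E u v = (LEAST n. R V E u v n)"
proof -
  have "\<And>n. (\<exists>p. walk V E p \<and> hd p = u \<and> last p = v \<and> length p = Suc n) \<longleftrightarrow> R V E u v n"
    using R_walk walk_R by fastforce
  then show ?thesis unfolding gdist_def by simp
qed

lemma R_in: "R V E u v n \<Longrightarrow> u \<in> V \<and> v \<in> V"
  by (induction rule: R.induct) auto

lemma R_trans: "R V E v w n \<Longrightarrow> R V E u v m \<Longrightarrow> R V E u w (m + n)"
  by (induction rule: R.induct) (auto intro: RS)

lemma R_edge: "E u v \<Longrightarrow> u \<in> V \<Longrightarrow> v \<in> V \<Longrightarrow> R V E u v 1"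
  using RS[OF R0] by fastforce

lemma R_sym: "R V E u v n \<Longrightarrow> (\<forall>u v. E u v \<longrightarrow> E v u) \<Longrightarrow> R V E v u n"
proof (induction rule: R.induct)
  case (R0 u) then show ?case by (blast intro: R.R0)
next
  case (RS u v n w)
  have "R V E w v 1" using RS R_in by (metis R_edge)
  from R_trans[OF RS.IH[OF RS.prems] this] show ?case by simp
qed

lemma gdist_le: "R V E u v n \<Longrightarrow> gdist V E u v \<le> n"
  unfolding gdist_R_def by (rule Least_le)

lemma gdist_R: "\<exists>n. R V E u v n \<Longrightarrow> R V E u v (gdist V E u v)"
  unfolding gdist_R_def by (rule LeastI_ex)

definition conn :: "'a set \<Rightarrow> ('a \<Rightarrow> 'a \<Rightarrow> bool) \<Rightarrow> bool" where
  "conn V E \<longleftrightarrow> (\<forall>u\<in>V. \<forall>v\<in>V. \<exists>n. R V E u v n)"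

lemma connected_conn: "connected_graph V E \<Longrightarrow> conn V E"
  unfolding connected_graph_def conn_def using walk_R by fastforce

lemma gdist_tri: "conn V E \<Longrightarrow> u \<in> V \<Longrightarrow> v \<in> V \<Longrightarrow> w \<in> V \<Longrightarrow>
  gdist V E u w \<le> gdist V E u v + gdist V E v w"
  by (meson R_trans conn_def gdist_R gdist_le)

lemma gdist_0: "u \<in> V \<Longrightarrow> gdist V E u u = 0"
  using gdist_le[OF R0] by auto

lemma gdist_edge: "E u v \<Longrightarrow> u \<in> V \<Longrightarrow> v \<in> V \<Longrightarrow> gdist V E u v \<le> 1"
  using gdist_le[OF R_edge] by auto

lemma R_map: "R V E u v n \<Longrightarrow> (\<forall>u\<in>V. f u \<in> V) \<Longrightarrow> (\<forall>u\<in>V. \<forall>v\<in>V. E u v \<longrightarrow> E (f u) (f v)) \<Longrightarrow>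
  R V E (f u) (f v) n"
proof (induction rule: R.induct)
  case (R0 u) then show ?case by (blast intro: R.R0)
next
  case (RS u v n w)
  then have "v \<in> V" using R_in by metis
  have "E (f v) (f w)" "f w \<in> V" using RS \<open>v \<in> V\<close> by auto
  from R.RS[OF RS.IH[OF RS.prems] this] show ?case .
qed

lemma gdist_inv:
  assumes c: "conn V E" and aut: "automorphism V E f" and inv: "\<forall>v\<in>V. f (f v) = v"
    and u: "u \<in> V" and v: "v \<in> V"
  shows "gdist V E (f u) (f v) = gdist V E u v"
proof -
  have fV: "\<forall>u\<in>V. f u \<in> V" using aut unfolding automorphism_def by (auto dest: bij_betwE)
  have fE: "\<forall>u\<in>V. \<forall>v\<in>V. E u v \<longrightarrow> E (f u) (f v)" using aut unfolding automorphism_def by auto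
  have le: "gdist V E (f x) (f y) \<le> gdist V E x y" if "x \<in> V" "y \<in> V" for x y
    using gdist_le[OF R_map[OF gdist_R fV fE]] c that unfolding conn_def by blast
  show ?thesis using le[OF u v] le[OF fV[rule_format, OF u] fV[rule_format, OF v]] inv u v by auto
qed



locale two_graphs =
  fixes V1 :: "'a set" and E1 and V2 :: "'b set" and E2
  assumes sg1: "simple_graph V1 E1" and c1: "conn V1 E1"
    and sg2: "simple_graph V2 E2" and c2: "conn V2 E2"
begin

abbreviation "P \<equiv> V1 \<times> V2"
abbreviation "EP \<equiv> cart_edges E1 E2"

lemma sym1: "\<forall>u v. E1 u v \<longrightarrow> E1 v u" using sg1 unfolding simple_graph_def by blast
lemma sym2: "\<forall>u v. E2 u v \<longrightarrow> E2 v u" using sg2 unfolding simple_graph_def by blast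
lemma irr1: "\<not> E1 u u" using sg1 unfolding simple_graph_def by blast
lemma irr2: "\<not> E2 u u" using sg2 unfolding simple_graph_def by blast
lemma in1: "E1 u v \<Longrightarrow> u \<in> V1 \<and> v \<in> V1" using sg1 unfolding simple_graph_def by blast
lemma in2: "E2 u v \<Longrightarrow> u \<in> V2 \<and> v \<in> V2" using sg2 unfolding simple_graph_def by blast

lemma RP1: "R V1 E1 u u' m \<Longrightarrow> v \<in> V2 \<Longrightarrow> R P EP (u,v) (u',v) m"
proof (induction rule: R.induct)
  case (R0 u) then show ?case by (simp add: R.R0)
next
  case (RS u x n w)
  have "EP (x,v) (w,v)" using RS by (simp add: cart_edges_def)
  moreover have "(w,v) \<in> P" using RS by simp
  ultimately show ?case using R.RS[OF RS.IH[OF RS.prems]] by blast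
qed

lemma RP2: "R V2 E2 v v' m \<Longrightarrow> u \<in> V1 \<Longrightarrow> R P EP (u,v) (u,v') m"
proof (induction rule: R.induct)
  case (R0 v) then show ?case by (simp add: R.R0)
next
  case (RS v x n w)
  have "EP (u,x) (u,w)" using RS by (simp add: cart_edges_def)
  moreover have "(u,w) \<in> P" using RS by simp
  ultimately show ?case using R.RS[OF RS.IH[OF RS.prems]] by blast
qed

lemma RP_ge: "R P EP p q n \<Longrightarrow>
  gdist V1 E1 (fst p) (fst q) + gdist V2 E2 (snd p) (snd q) \<le> n"
proof (induction rule: R.induct)
  case (R0 u)
  then have "fst u \<in> V1" "snd u \<in> V2" by auto
  then show ?case by (simp add: gdist_0)
next
  case (RS p q n r)
  note h = RS.hyps
  have pP: "p \<in> P" and qP: "q \<in> P" using R_in[OF h(1)] by auto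
  have rP: "r \<in> P" using h(3) .
  show ?case
  proof (cases "fst q = fst r \<and> E2 (snd q) (snd r)")
    case True
    have "gdist V2 E2 (snd p) (snd r) \<le> gdist V2 E2 (snd p) (snd q) + gdist V2 E2 (snd q) (snd r)"
      by (rule gdist_tri[OF c2]) (use pP qP rP in \<open>auto simp: mem_Times_iff\<close>)
    moreover have "gdist V2 E2 (snd q) (snd r) \<le> 1"
      using True in2[of "snd q" "snd r"] gdist_edge[of E2 "snd q" "snd r" V2] by simp
    ultimately show ?thesis using RS.IH True by simp
  next
    case False
    then have F: "E1 (fst q) (fst r) \<and> snd q = snd r" using h(2) unfolding cart_edges_def by blast
    have "gdist V1 E1 (fst p) (fst r) \<le> gdist V1 E1 (fst p) (fst q) + gdist V1 E1 (fst q) (fst r)"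
      by (rule gdist_tri[OF c1]) (use pP qP rP in \<open>auto simp: mem_Times_iff\<close>)
    moreover have "gdist V1 E1 (fst q) (fst r) \<le> 1"
      using F in1[of "fst q" "fst r"] gdist_edge[of E1 "fst q" "fst r" V1] by simp
    ultimately show ?thesis using RS.IH F by simp
  qed
qed

lemma RP_ex: "u \<in> V1 \<Longrightarrow> u' \<in> V1 \<Longrightarrow> v \<in> V2 \<Longrightarrow> v' \<in> V2 \<Longrightarrow>
   R P EP (u,v) (u',v') (gdist V1 E1 u u' + gdist V2 E2 v v')"
proof -
  assume a: "u \<in> V1" "u' \<in> V1" "v \<in> V2" "v' \<in> V2"
  have "\<exists>n. R V1 E1 u u' n" using c1 a(1,2) unfolding conn_def by simp
  then have "R V1 E1 u u' (gdist V1 E1 u u')" by (rule gdist_R)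
  then have 1: "R P EP (u,v) (u',v) (gdist V1 E1 u u')" using a(3) by (rule RP1)
  have "\<exists>n. R V2 E2 v v' n" using c2 a(3,4) unfolding conn_def by simp
  then have "R V2 E2 v v' (gdist V2 E2 v v')" by (rule gdist_R)
  then have 2: "R P EP (u',v) (u',v') (gdist V2 E2 v v')" using a(2) by (rule RP2)
  show ?thesis using R_trans[OF 2 1] .
qed

lemma gdistP: "u \<in> V1 \<Longrightarrow> u' \<in> V1 \<Longrightarrow> v \<in> V2 \<Longrightarrow> v' \<in> V2 \<Longrightarrow>
   gdist P EP (u,v) (u',v') = gdist V1 E1 u u' + gdist V2 E2 v v'"
proof -
  assume a: "u \<in> V1" "u' \<in> V1" "v \<in> V2" "v' \<in> V2"
  have 1: "R P EP (u,v) (u',v') (gdist V1 E1 u u' + gdist V2 E2 v v')" using RP_ex[OF a] .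
  have "R P EP (u,v) (u',v') (gdist P EP (u,v) (u',v'))" using 1 by (intro gdist_R) blast
  from RP_ge[OF this] have "gdist V1 E1 u u' + gdist V2 E2 v v' \<le> gdist P EP (u,v) (u',v')" by simp
  moreover have "gdist P EP (u,v) (u',v') \<le> gdist V1 E1 u u' + gdist V2 E2 v v'" using gdist_le[OF 1] .
  ultimately show ?thesis by simp
qed

lemma connP: "conn P EP"
  unfolding conn_def using RP_ex by fast

lemma closerP1: "a \<in> V1 \<Longrightarrow> a' \<in> V1 \<Longrightarrow> b \<in> V2 \<Longrightarrow>
  closer P EP (a,b) (a',b) = closer V1 E1 a a' \<times> V2"
  unfolding closer_def by (auto simp: gdistP)

lemma equidistP1: "a \<in> V1 \<Longrightarrow> a' \<in> V1 \<Longrightarrow> b \<in> V2 \<Longrightarrow>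
  equidist P EP (a,b) (a',b) = equidist V1 E1 a a' \<times> V2"
  unfolding equidist_def by (auto simp: gdistP)

lemma closerP2: "a \<in> V1 \<Longrightarrow> b \<in> V2 \<Longrightarrow> b' \<in> V2 \<Longrightarrow>
  closer P EP (a,b) (a,b') = V1 \<times> closer V2 E2 b b'"
  unfolding closer_def by (auto simp: gdistP)

lemma equidistP2: "a \<in> V1 \<Longrightarrow> b \<in> V2 \<Longrightarrow> b' \<in> V2 \<Longrightarrow>
  equidist P EP (a,b) (a,b') = V1 \<times> equidist V2 E2 b b'"
  unfolding equidist_def by (auto simp: gdistP)

end


context two_graphs
begin

lemma closer_disj: "u \<in> closer V E a a' \<Longrightarrow> u \<in> closer V E a' a \<Longrightarrow> False"
  unfolding closer_def by auto

lemma fwd1: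
  assumes r: "reflection V1 E1 a a' \<psi>" and e: "E1 a a'" and b: "b \<in> V2"
  shows "reflection P EP (a,b) (a',b) (\<lambda>p. (\<psi> (fst p), snd p))"
proof -
  have a: "a \<in> V1" "a' \<in> V1" using in1[OF e] by auto
  note rr = r[unfolded reflection_def automorphism_def]
  have bij: "bij_betw \<psi> V1 V1" and edg: "\<forall>u\<in>V1. \<forall>v\<in>V1. E1 (\<psi> u) (\<psi> v) \<longleftrightarrow> E1 u v"
    and inv: "\<forall>v\<in>V1. \<psi> (\<psi> v) = v" and pa: "\<psi> a = a'"
    and ce: "\<forall>u\<in>closer V1 E1 a a'. \<forall>w\<in>closer V1 E1 a' a. E1 u w \<longleftrightarrow> w = \<psi> u"
    and cl: "\<forall>u\<in>closer V1 E1 a a'. \<psi> u \<in> closer V1 E1 a' a \<and> E1 u (\<psi> u)"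
    and eq: "\<forall>v\<in>equidist V1 E1 a a'. \<psi> v = v"
    using rr by auto
  have psiV: "\<psi> u \<in> V1" if "u \<in> V1" for u using bij that by (auto dest: bij_betwE)
  have inj: "\<psi> u = \<psi> v \<longleftrightarrow> u = v" if "u \<in> V1" "v \<in> V1" for u v
    using inv that by metis
  define \<Phi> where "\<Phi> = (\<lambda>p::'a \<times> 'b. (\<psi> (fst p), snd p))"
  have invP: "\<forall>v\<in>P. \<Phi> (\<Phi> v) = v" using inv unfolding \<Phi>_def by auto
  have mapP: "\<Phi> ` P \<subseteq> P" using psiV unfolding \<Phi>_def by auto
  have bijP: "bij_betw \<Phi> P P"
    by (rule bij_betw_byWitness[OF invP invP mapP mapP])
  have edgP: "\<forall>u\<in>P. \<forall>v\<in>P. EP (\<Phi> u) (\<Phi> v) \<longleftrightarrow> EP u v"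
    unfolding \<Phi>_def cart_edges_def using edg inj by auto
  have C: "closer P EP (a,b) (a',b) = closer V1 E1 a a' \<times> V2" using closerP1 a b by blast
  have C': "closer P EP (a',b) (a,b) = closer V1 E1 a' a \<times> V2" using closerP1 a b by blast
  have Q: "equidist P EP (a,b) (a',b) = equidist V1 E1 a a' \<times> V2" using equidistP1 a b by blast
  have ceP: "\<forall>u\<in>closer P EP (a,b) (a',b). \<forall>w\<in>closer P EP (a',b) (a,b). EP u w \<longleftrightarrow> w = \<Phi> u"
  proof (intro ballI)
    fix u w assume u: "u \<in> closer P EP (a,b) (a',b)" and w: "w \<in> closer P EP (a',b) (a,b)"
    then have u1: "fst u \<in> closer V1 E1 a a'" and w1: "fst w \<in> closer V1 E1 a' a"
      using C C' by auto
    have "fst u \<noteq> fst w" using u1 w1 closer_disj by metis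
    then show "EP u w \<longleftrightarrow> w = \<Phi> u"
      unfolding cart_edges_def \<Phi>_def using ce u1 w1 by (cases u, cases w) auto
  qed
  have clP: "\<forall>u\<in>closer P EP (a,b) (a',b). \<Phi> u \<in> closer P EP (a',b) (a,b) \<and> EP u (\<Phi> u)"
    unfolding C C' \<Phi>_def cart_edges_def using cl by auto
  have eqP: "\<forall>v\<in>equidist P EP (a,b) (a',b). \<Phi> v = v"
    unfolding Q \<Phi>_def using eq by auto
  have "reflection P EP (a,b) (a',b) \<Phi>"
    unfolding reflection_def automorphism_def
    using bijP edgP invP ceP clP eqP pa by (simp add: \<Phi>_def)
  then show ?thesis unfolding \<Phi>_def .
qed

lemma fwd2:
  assumes r: "reflection V2 E2 b b' \<psi>" and e: "E2 b b'" and a: "a \<in> V1"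
  shows "reflection P EP (a,b) (a,b') (\<lambda>p. (fst p, \<psi> (snd p)))"
proof -
  have b: "b \<in> V2" "b' \<in> V2" using in2[OF e] by auto
  note rr = r[unfolded reflection_def automorphism_def]
  have bij: "bij_betw \<psi> V2 V2" and edg: "\<forall>u\<in>V2. \<forall>v\<in>V2. E2 (\<psi> u) (\<psi> v) \<longleftrightarrow> E2 u v"
    and inv: "\<forall>v\<in>V2. \<psi> (\<psi> v) = v" and pa: "\<psi> b = b'"
    and ce: "\<forall>u\<in>closer V2 E2 b b'. \<forall>w\<in>closer V2 E2 b' b. E2 u w \<longleftrightarrow> w = \<psi> u"
    and cl: "\<forall>u\<in>closer V2 E2 b b'. \<psi> u \<in> closer V2 E2 b' b \<and> E2 u (\<psi> u)"
    and eq: "\<forall>v\<in>equidist V2 E2 b b'. \<psi> v = v"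
    using rr by auto
  have psiV: "\<psi> u \<in> V2" if "u \<in> V2" for u using bij that by (auto dest: bij_betwE)
  have inj: "\<psi> u = \<psi> v \<longleftrightarrow> u = v" if "u \<in> V2" "v \<in> V2" for u v
    using inv that by metis
  define \<Phi> where "\<Phi> = (\<lambda>p::'a \<times> 'b. (fst p, \<psi> (snd p)))"
  have invP: "\<forall>v\<in>P. \<Phi> (\<Phi> v) = v" using inv unfolding \<Phi>_def by auto
  have mapP: "\<Phi> ` P \<subseteq> P" using psiV unfolding \<Phi>_def by auto
  have bijP: "bij_betw \<Phi> P P"
    by (rule bij_betw_byWitness[OF invP invP mapP mapP])
  have edgP: "\<forall>u\<in>P. \<forall>v\<in>P. EP (\<Phi> u) (\<Phi> v) \<longleftrightarrow> EP u v"
    unfolding \<Phi>_def cart_edges_def using edg inj by auto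
  have C: "closer P EP (a,b) (a,b') = V1 \<times> closer V2 E2 b b'" using closerP2 a b by blast
  have C': "closer P EP (a,b') (a,b) = V1 \<times> closer V2 E2 b' b" using closerP2 a b by blast
  have Q: "equidist P EP (a,b) (a,b') = V1 \<times> equidist V2 E2 b b'" using equidistP2 a b by blast
  have ceP: "\<forall>u\<in>closer P EP (a,b) (a,b'). \<forall>w\<in>closer P EP (a,b') (a,b). EP u w \<longleftrightarrow> w = \<Phi> u"
  proof (intro ballI)
    fix u w assume u: "u \<in> closer P EP (a,b) (a,b')" and w: "w \<in> closer P EP (a,b') (a,b)"
    then have u1: "snd u \<in> closer V2 E2 b b'" and w1: "snd w \<in> closer V2 E2 b' b"
      using C C' by auto
    have "snd u \<noteq> snd w" using u1 w1 closer_disj by metis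
    then show "EP u w \<longleftrightarrow> w = \<Phi> u"
      unfolding cart_edges_def \<Phi>_def using ce u1 w1 by (cases u, cases w) auto
  qed
  have clP: "\<forall>u\<in>closer P EP (a,b) (a,b'). \<Phi> u \<in> closer P EP (a,b') (a,b) \<and> EP u (\<Phi> u)"
    unfolding C C' \<Phi>_def cart_edges_def using cl by auto
  have eqP: "\<forall>v\<in>equidist P EP (a,b) (a,b'). \<Phi> v = v"
    unfolding Q \<Phi>_def using eq by auto
  have "reflection P EP (a,b) (a,b') \<Phi>"
    unfolding reflection_def automorphism_def
    using bijP edgP invP ceP clP eqP pa by (simp add: \<Phi>_def)
  then show ?thesis unfolding \<Phi>_def .
qed

end


context two_graphs
begin

lemma three_way: "u \<in> V \<Longrightarrow> u \<in> closer V E a a' \<or> u \<in> closer V E a' a \<or> u \<in> equidist V E a a'"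
  unfolding closer_def equidist_def by auto

lemma bwd1:
  assumes r: "reflection P EP (a,b) (a',b) \<Phi>" and e: "E1 a a'" and b: "b \<in> V2"
  shows "\<exists>\<psi>. reflection V1 E1 a a' \<psi>"
proof -
  have a: "a \<in> V1" "a' \<in> V1" using in1[OF e] by auto
  note rr = r[unfolded reflection_def automorphism_def]
  have bij: "bij_betw \<Phi> P P" and edg: "\<forall>u\<in>P. \<forall>v\<in>P. EP (\<Phi> u) (\<Phi> v) \<longleftrightarrow> EP u v"
    and inv: "\<forall>v\<in>P. \<Phi> (\<Phi> v) = v" and pa: "\<Phi> (a,b) = (a',b)"
    and ce: "\<forall>u\<in>closer P EP (a,b) (a',b). \<forall>w\<in>closer P EP (a',b) (a,b). EP u w \<longleftrightarrow> w = \<Phi> u"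
    and cl: "\<forall>u\<in>closer P EP (a,b) (a',b). \<Phi> u \<in> closer P EP (a',b) (a,b) \<and> EP u (\<Phi> u)"
    and eq: "\<forall>v\<in>equidist P EP (a,b) (a',b). \<Phi> v = v"
    using rr by auto
  have aut: "automorphism P EP \<Phi>" using bij edg unfolding automorphism_def by blast
  have PV: "\<Phi> p \<in> P" if "p \<in> P" for p using bij that by (auto dest: bij_betwE)
  have C: "closer P EP (a,b) (a',b) = closer V1 E1 a a' \<times> V2" using closerP1 a b by blast
  have C': "closer P EP (a',b) (a,b) = closer V1 E1 a' a \<times> V2" using closerP1 a b by blast
  have Q: "equidist P EP (a,b) (a',b) = equidist V1 E1 a a' \<times> V2" using equidistP1 a b by blast
  have pa': "\<Phi> (a',b) = (a,b)" using inv pa a b by (metis mem_Times_iff fst_conv snd_conv)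
  have A: "snd (\<Phi> (u,c)) = c \<and> fst (\<Phi> (u,c)) \<in> closer V1 E1 a' a \<and> E1 u (fst (\<Phi> (u,c)))"
    if u: "u \<in> closer V1 E1 a a'" and c: "c \<in> V2" for u c
  proof -
    have "(u,c) \<in> closer P EP (a,b) (a',b)" using C u c by simp
    then have h: "\<Phi> (u,c) \<in> closer V1 E1 a' a \<times> V2" "EP (u,c) (\<Phi> (u,c))" using cl C' by auto
    have "fst (\<Phi> (u,c)) \<noteq> u" using h(1) u closer_disj by fastforce
    then show ?thesis using h unfolding cart_edges_def by auto
  qed
  have B: "\<Phi> (w,c) \<in> closer V1 E1 a a' \<times> V2" if w: "w \<in> closer V1 E1 a' a" and c: "c \<in> V2" for w c
  proof -
    have wc: "(w,c) \<in> closer P EP (a',b) (a,b)" using C' w c by simp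
    have wP: "(w,c) \<in> P" using w c unfolding closer_def by auto
    have aP: "(a,b) \<in> P" "(a',b) \<in> P" using a b by auto
    have d1: "gdist P EP (\<Phi> (w,c)) (a,b) = gdist P EP (w,c) (a',b)"
      using gdist_inv[OF connP aut inv wP aP(2)] pa' by simp
    have d2: "gdist P EP (\<Phi> (w,c)) (a',b) = gdist P EP (w,c) (a,b)"
      using gdist_inv[OF connP aut inv wP aP(1)] pa by simp
    have "\<Phi> (w,c) \<in> closer P EP (a,b) (a',b)"
      using wc d1 d2 PV[OF wP] unfolding closer_def by auto
    then show ?thesis using C by simp
  qed
  have Bs: "snd (\<Phi> (w,c)) = c" if w: "w \<in> closer V1 E1 a' a" and c: "c \<in> V2" for w c
  proof -
    obtain u c' where uc: "\<Phi> (w,c) = (u,c')" "u \<in> closer V1 E1 a a'" "c' \<in> V2" using B[OF w c] by auto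
    have wP: "(w,c) \<in> P" using w c unfolding closer_def by auto
    have "\<Phi> (u,c') = (w,c)" using inv wP uc(1) by metis
    then show ?thesis using A[OF uc(2) uc(3)] uc(1) by simp
  qed
  have Qs: "\<Phi> (u,c) = (u,c)" if "u \<in> equidist V1 E1 a a'" "c \<in> V2" for u c
    using eq Q that by auto
  have snd_all: "\<Phi> (u,c) = (fst (\<Phi> (u,c)), c)" if "u \<in> V1" "c \<in> V2" for u c
  proof -
    have "snd (\<Phi> (u,c)) = c"
      using three_way[OF that(1), of E1 a a'] A[OF _ that(2)] Bs[OF _ that(2)] Qs[OF _ that(2)] by auto
    then show ?thesis by (metis prod.collapse)
  qed
  define \<psi> where "\<psi> = (\<lambda>u. fst (\<Phi> (u,b)))"
  have Pb: "\<Phi> (u,b) = (\<psi> u, b)" if "u \<in> V1" for u using snd_all[OF that b] unfolding \<psi>_def .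
  have psiV: "\<psi> u \<in> V1" if "u \<in> V1" for u using PV[of "(u,b)"] that b Pb by auto
  have psi_inv: "\<forall>v\<in>V1. \<psi> (\<psi> v) = v"
  proof
    fix v assume v: "v \<in> V1"
    have "\<Phi> (\<Phi> (v,b)) = (v,b)" using inv v b by auto
    then show "\<psi> (\<psi> v) = v" using Pb[OF v] Pb[OF psiV[OF v]] by simp
  qed
  have mapV: "\<psi> ` V1 \<subseteq> V1" using psiV by auto
  have psi_bij: "bij_betw \<psi> V1 V1" by (rule bij_betw_byWitness[OF psi_inv psi_inv mapV mapV])
  have Eb: "EP (u,b) (v,b) \<longleftrightarrow> E1 u v" for u v unfolding cart_edges_def using irr2 by auto
  have psi_edg: "\<forall>u\<in>V1. \<forall>v\<in>V1. E1 (\<psi> u) (\<psi> v) \<longleftrightarrow> E1 u v"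
  proof (intro ballI)
    fix u v assume uv: "u \<in> V1" "v \<in> V1"
    have "E1 (\<psi> u) (\<psi> v) \<longleftrightarrow> EP (\<Phi> (u,b)) (\<Phi> (v,b))" using Pb uv Eb by simp
    also have "\<dots> \<longleftrightarrow> EP (u,b) (v,b)" using edg uv b by auto
    finally show "E1 (\<psi> u) (\<psi> v) \<longleftrightarrow> E1 u v" using Eb by simp
  qed
  have psi_a: "\<psi> a = a'" using Pb[OF a(1)] pa by simp
  have psi_ce: "\<forall>u\<in>closer V1 E1 a a'. \<forall>w\<in>closer V1 E1 a' a. E1 u w \<longleftrightarrow> w = \<psi> u"
  proof (intro ballI)
    fix u w assume u: "u \<in> closer V1 E1 a a'" and w: "w \<in> closer V1 E1 a' a"
    have uV: "u \<in> V1" using u unfolding closer_def by auto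
    have "(u,b) \<in> closer P EP (a,b) (a',b)" "(w,b) \<in> closer P EP (a',b) (a,b)" using u w b C C' by auto
    then have "EP (u,b) (w,b) \<longleftrightarrow> (w,b) = \<Phi> (u,b)" using ce by blast
    then show "E1 u w \<longleftrightarrow> w = \<psi> u" using Eb Pb[OF uV] by simp
  qed
  have psi_cl: "\<forall>u\<in>closer V1 E1 a a'. \<psi> u \<in> closer V1 E1 a' a \<and> E1 u (\<psi> u)"
    using A[OF _ b] unfolding \<psi>_def by blast
  have psi_eq: "\<forall>v\<in>equidist V1 E1 a a'. \<psi> v = v"
    using Qs[OF _ b] unfolding \<psi>_def by simp
  have "reflection V1 E1 a a' \<psi>"
    unfolding reflection_def automorphism_def
    using psi_bij psi_edg psi_inv psi_a psi_ce psi_cl psi_eq by blast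
  then show ?thesis by blast
qed

lemma bwd2:
  assumes r: "reflection P EP (a,b) (a,b') \<Phi>" and e: "E2 b b'" and a: "a \<in> V1"
  shows "\<exists>\<psi>. reflection V2 E2 b b' \<psi>"
proof -
  have b: "b \<in> V2" "b' \<in> V2" using in2[OF e] by auto
  note rr = r[unfolded reflection_def automorphism_def]
  have bij: "bij_betw \<Phi> P P" and edg: "\<forall>u\<in>P. \<forall>v\<in>P. EP (\<Phi> u) (\<Phi> v) \<longleftrightarrow> EP u v"
    and inv: "\<forall>v\<in>P. \<Phi> (\<Phi> v) = v" and pa: "\<Phi> (a,b) = (a,b')"
    and ce: "\<forall>u\<in>closer P EP (a,b) (a,b'). \<forall>w\<in>closer P EP (a,b') (a,b). EP u w \<longleftrightarrow> w = \<Phi> u"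
    and cl: "\<forall>u\<in>closer P EP (a,b) (a,b'). \<Phi> u \<in> closer P EP (a,b') (a,b) \<and> EP u (\<Phi> u)"
    and eq: "\<forall>v\<in>equidist P EP (a,b) (a,b'). \<Phi> v = v"
    using rr by auto
  have aut: "automorphism P EP \<Phi>" using bij edg unfolding automorphism_def by blast
  have PV: "\<Phi> p \<in> P" if "p \<in> P" for p using bij that by (auto dest: bij_betwE)
  have C: "closer P EP (a,b) (a,b') = V1 \<times> closer V2 E2 b b'" using closerP2 a b by blast
  have C': "closer P EP (a,b') (a,b) = V1 \<times> closer V2 E2 b' b" using closerP2 a b by blast
  have Q: "equidist P EP (a,b) (a,b') = V1 \<times> equidist V2 E2 b b'" using equidistP2 a b by blast
  have pa': "\<Phi> (a,b') = (a,b)" using inv pa a b by (metis mem_Times_iff fst_conv snd_conv)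
  have A: "fst (\<Phi> (c,u)) = c \<and> snd (\<Phi> (c,u)) \<in> closer V2 E2 b' b \<and> E2 u (snd (\<Phi> (c,u)))"
    if u: "u \<in> closer V2 E2 b b'" and c: "c \<in> V1" for u c
  proof -
    have "(c,u) \<in> closer P EP (a,b) (a,b')" using C u c by simp
    then have h: "\<Phi> (c,u) \<in> V1 \<times> closer V2 E2 b' b" "EP (c,u) (\<Phi> (c,u))" using cl C' by auto
    have "snd (\<Phi> (c,u)) \<noteq> u" using h(1) u closer_disj by fastforce
    then show ?thesis using h unfolding cart_edges_def by auto
  qed
  have B: "\<Phi> (c,w) \<in> V1 \<times> closer V2 E2 b b'" if w: "w \<in> closer V2 E2 b' b" and c: "c \<in> V1" for w c
  proof -
    have wc: "(c,w) \<in> closer P EP (a,b') (a,b)" using C' w c by simp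
    have wP: "(c,w) \<in> P" using w c unfolding closer_def by auto
    have aP: "(a,b) \<in> P" "(a,b') \<in> P" using a b by auto
    have d1: "gdist P EP (\<Phi> (c,w)) (a,b) = gdist P EP (c,w) (a,b')"
      using gdist_inv[OF connP aut inv wP aP(2)] pa' by simp
    have d2: "gdist P EP (\<Phi> (c,w)) (a,b') = gdist P EP (c,w) (a,b)"
      using gdist_inv[OF connP aut inv wP aP(1)] pa by simp
    have "\<Phi> (c,w) \<in> closer P EP (a,b) (a,b')"
      using wc d1 d2 PV[OF wP] unfolding closer_def by auto
    then show ?thesis using C by simp
  qed
  have Bs: "fst (\<Phi> (c,w)) = c" if w: "w \<in> closer V2 E2 b' b" and c: "c \<in> V1" for w c
  proof -
    obtain c' u where uc: "\<Phi> (c,w) = (c',u)" "u \<in> closer V2 E2 b b'" "c' \<in> V1" using B[OF w c] by auto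
    have wP: "(c,w) \<in> P" using w c unfolding closer_def by auto
    have "\<Phi> (c',u) = (c,w)" using inv wP uc(1) by metis
    then show ?thesis using A[OF uc(2) uc(3)] uc(1) by simp
  qed
  have Qs: "\<Phi> (c,u) = (c,u)" if "u \<in> equidist V2 E2 b b'" "c \<in> V1" for u c
    using eq Q that by auto
  have fst_all: "\<Phi> (c,u) = (c, snd (\<Phi> (c,u)))" if "u \<in> V2" "c \<in> V1" for u c
  proof -
    have "fst (\<Phi> (c,u)) = c"
      using three_way[OF that(1), of E2 b b'] A[OF _ that(2)] Bs[OF _ that(2)] Qs[OF _ that(2)] by auto
    then show ?thesis by (metis prod.collapse)
  qed
  define \<psi> where "\<psi> = (\<lambda>u. snd (\<Phi> (a,u)))"
  have Pb: "\<Phi> (a,u) = (a, \<psi> u)" if "u \<in> V2" for u using fst_all[OF that a] unfolding \<psi>_def .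
  have psiV: "\<psi> u \<in> V2" if "u \<in> V2" for u using PV[of "(a,u)"] that a Pb by auto
  have psi_inv: "\<forall>v\<in>V2. \<psi> (\<psi> v) = v"
  proof
    fix v assume v: "v \<in> V2"
    have "\<Phi> (\<Phi> (a,v)) = (a,v)" using inv v a by auto
    then show "\<psi> (\<psi> v) = v" using Pb[OF v] Pb[OF psiV[OF v]] by simp
  qed
  have mapV: "\<psi> ` V2 \<subseteq> V2" using psiV by auto
  have psi_bij: "bij_betw \<psi> V2 V2" by (rule bij_betw_byWitness[OF psi_inv psi_inv mapV mapV])
  have Eb: "EP (a,u) (a,v) \<longleftrightarrow> E2 u v" for u v unfolding cart_edges_def using irr1 by auto
  have psi_edg: "\<forall>u\<in>V2. \<forall>v\<in>V2. E2 (\<psi> u) (\<psi> v) \<longleftrightarrow> E2 u v"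
  proof (intro ballI)
    fix u v assume uv: "u \<in> V2" "v \<in> V2"
    have "E2 (\<psi> u) (\<psi> v) \<longleftrightarrow> EP (\<Phi> (a,u)) (\<Phi> (a,v))" using Pb uv Eb by simp
    also have "\<dots> \<longleftrightarrow> EP (a,u) (a,v)" using edg uv a by auto
    finally show "E2 (\<psi> u) (\<psi> v) \<longleftrightarrow> E2 u v" using Eb by simp
  qed
  have psi_a: "\<psi> b = b'" using Pb[OF b(1)] pa by simp
  have psi_ce: "\<forall>u\<in>closer V2 E2 b b'. \<forall>w\<in>closer V2 E2 b' b. E2 u w \<longleftrightarrow> w = \<psi> u"
  proof (intro ballI)
    fix u w assume u: "u \<in> closer V2 E2 b b'" and w: "w \<in> closer V2 E2 b' b"
    have uV: "u \<in> V2" using u unfolding closer_def by auto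
    have "(a,u) \<in> closer P EP (a,b) (a,b')" "(a,w) \<in> closer P EP (a,b') (a,b)" using u w a C C' by auto
    then have "EP (a,u) (a,w) \<longleftrightarrow> (a,w) = \<Phi> (a,u)" using ce by blast
    then show "E2 u w \<longleftrightarrow> w = \<psi> u" using Eb Pb[OF uV] by simp
  qed
  have psi_cl: "\<forall>u\<in>closer V2 E2 b b'. \<psi> u \<in> closer V2 E2 b' b \<and> E2 u (\<psi> u)"
    using A[OF _ a] unfolding \<psi>_def by blast
  have psi_eq: "\<forall>v\<in>equidist V2 E2 b b'. \<psi> v = v"
    using Qs[OF _ a] unfolding \<psi>_def by simp
  have "reflection V2 E2 b b' \<psi>"
    unfolding reflection_def automorphism_def
    using psi_bij psi_edg psi_inv psi_a psi_ce psi_cl psi_eq by blast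
  then show ?thesis by blast
qed

end

theorem lemma2p8:
  fixes V1 :: "'a set" and E1 :: "'a \<Rightarrow> 'a \<Rightarrow> bool"
    and V2 :: "'b set" and E2 :: "'b \<Rightarrow> 'b \<Rightarrow> bool"
  assumes "finite V1" "simple_graph V1 E1" "connected_graph V1 E1"
      and "finite V2" "simple_graph V2 E2" "connected_graph V2 E2"
  shows "(reflective V1 E1 \<and> reflective V2 E2) \<longleftrightarrow>
         reflective (V1 \<times> V2) (cart_edges E1 E2)"
proof -
  interpret two_graphs V1 E1 V2 E2
    using assms(2,5) connected_conn[OF assms(3)] connected_conn[OF assms(6)] by unfold_locales
  have ne1: "V1 \<noteq> {}" and ne2: "V2 \<noteq> {}" using assms unfolding connected_graph_def by auto
  show ?thesis
  proof
    assume h: "reflective V1 E1 \<and> reflective V2 E2"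
    show "reflective (V1 \<times> V2) (cart_edges E1 E2)"
      unfolding reflective_def
    proof (intro ballI impI)
      fix x y assume x: "x \<in> V1 \<times> V2" and y: "y \<in> V1 \<times> V2" and e: "cart_edges E1 E2 x y"
      obtain a b where ab: "x = (a,b)" by (cases x)
      obtain a' b' where ab': "y = (a',b')" by (cases y)
      show "\<exists>\<phi>. reflection (V1 \<times> V2) (cart_edges E1 E2) x y \<phi>"
      proof (cases "a = a' \<and> E2 b b'")
        case True
        then obtain \<psi> where "reflection V2 E2 b b' \<psi>"
          using h in2 unfolding reflective_def by blast
        from fwd2[OF this] True x ab ab' show ?thesis by auto
      next
        case False
        then have F: "E1 a a' \<and> b = b'" using e ab ab' unfolding cart_edges_def by auto
        then obtain \<psi> where "reflection V1 E1 a a' \<psi>"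
          using h in1 unfolding reflective_def by blast
        from fwd1[OF this] F x ab ab' show ?thesis by auto
      qed
    qed
  next
    assume h: "reflective (V1 \<times> V2) (cart_edges E1 E2)"
    obtain a0 where a0: "a0 \<in> V1" using ne1 by auto
    obtain b0 where b0: "b0 \<in> V2" using ne2 by auto
    have "reflective V1 E1"
      unfolding reflective_def
    proof (intro ballI impI)
      fix a a' assume a: "a \<in> V1" "a' \<in> V1" and e: "E1 a a'"
      have "cart_edges E1 E2 (a,b0) (a',b0)" using e unfolding cart_edges_def by auto
      then obtain \<Phi> where "reflection (V1 \<times> V2) (cart_edges E1 E2) (a,b0) (a',b0) \<Phi>"
        using h a b0 unfolding reflective_def by blast
      from bwd1[OF this e b0] show "\<exists>\<phi>. reflection V1 E1 a a' \<phi>" .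
    qed
    moreover have "reflective V2 E2"
      unfolding reflective_def
    proof (intro ballI impI)
      fix b b' assume b: "b \<in> V2" "b' \<in> V2" and e: "E2 b b'"
      have "cart_edges E1 E2 (a0,b) (a0,b')" using e unfolding cart_edges_def by auto
      then obtain \<Phi> where "reflection (V1 \<times> V2) (cart_edges E1 E2) (a0,b) (a0,b') \<Phi>"
        using h a0 b unfolding reflective_def by blast
      from bwd2[OF this e a0] show "\<exists>\<phi>. reflection V2 E2 b b' \<phi>" .
    qed
    ultimately show "reflective V1 E1 \<and> reflective V2 E2" by blast
  qed
qed

end
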